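(* For every $n\geq 1$, $$\sum_{T\in \mathcal P_{n,0}}x^{\mathrm{young}_T(1)}\,t^{\mathrm{eld}(T)}=\prod_{k=0}^{n-2}(x+k+kt).$$ In particular, the number of increasing (non-plane) rooted trees on $[n]$ is $(n-1)!$ and the number of increasing plane trees on $[n]$ is $(2n-3)!!$.
   Context: All trees are rooted trees whose vertices are labeled by distinct positive integers. A vertex $j$ is a descendant of $i$ if the path from the root to $j$ passes through $i$ (every vertex is a descendant of itself); $\beta_T(i)$ is the smallest descendant of $i$. If $j$ is a descendant of $i$ joined to $i$ by an edge, $j$ is a child of $i$ and the edge is written $(i,j)$; children of the same vertex are brothers. A plane tree is a rooted tree in which the children of each vertex are linearly ordered (left to right). In a plane tree $T$, a vertex $j$ is elder if it has a brother $k$ to its right with $\beta_T(k)<\beta_T(j)$. $\mathrm{eld}_T(v)$ is the number of elder children of $v$, $\mathrm{eld}(T)$ the total number of elder vertices, $\deg_T(v)$ the number of children of $v$, and $\mathrm{young}_T(v)=\deg_T(v)-\mathrm{eld}_T(v)$. An edge $(i,j)$ is proper if $j$ is an elder child of $i$ or $i<\beta_T(j)$; otherwise improper. $\mathcal P_{n,0}$ is the set of plane trees on $[n]=\{1,\dots,n\}$ (any root) with no improper edges. A (plane) tree on $[n]$ is increasing if the labels along every path from the root to another vertex form an increasing sequence. Here $(2n-3)!!=1\cdot3\cdots(2n-3)$, equal to $1$ when $n=1$. *)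

theory Defs
  imports Main
begin

text \<open>Labelled plane trees: a node carries its label and the ordered
  (left to right) list of its children subtrees.\<close>
datatype ptree = Node nat "ptree list"

fun root :: "ptree \<Rightarrow> nat" where
  "root (Node v cs) = v"

fun children :: "ptree \<Rightarrow> ptree list" where
  "children (Node v cs) = cs"

fun labels :: "ptree \<Rightarrow> nat list" where
  "labels (Node v cs) = v # concat (map labels cs)"

fun nodes :: "ptree \<Rightarrow> ptree list" where
  "nodes (Node v cs) = Node v cs # concat (map nodes cs)"

definition beta :: "ptree \<Rightarrow> nat" where
  "beta T = Min (set (labels T))"

definition elder_at :: "ptree list \<Rightarrow> nat \<Rightarrow> bool" where
  "elder_at cs a \<longleftrightarrow> (\<exists>b. a < b \<and> b < length cs \<and> beta (cs ! b) < beta (cs ! a))"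

definition eld_node :: "ptree \<Rightarrow> nat" where
  "eld_node N = card {a. a < length (children N) \<and> elder_at (children N) a}"

definition eld :: "ptree \<Rightarrow> nat" where
  "eld T = sum_list (map eld_node (nodes T))"

text \<open>young_T(v) = deg_T(v) - eld_T(v), for the (unique, labels being distinct)
  vertex with label v.\<close>
definition young :: "ptree \<Rightarrow> nat \<Rightarrow> nat" where
  "young T v = sum_list (map (\<lambda>N. if root N = v then length (children N) - eld_node N else 0) (nodes T))"

text \<open>Edge (i,j) from a vertex i to its a-th child j is proper iff j is elder or i < beta(j).\<close>
definition no_improper :: "ptree \<Rightarrow> bool" where
  "no_improper T \<longleftrightarrow> (\<forall>N\<in>set (nodes T). \<forall>a < length (children N).
      elder_at (children N) a \<or> root N < beta (children N ! a))"

definition plane_tree_on :: "nat \<Rightarrow> ptree \<Rightarrow> bool" where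
  "plane_tree_on n T \<longleftrightarrow> distinct (labels T) \<and> set (labels T) = {1..n}"

definition P_n0 :: "nat \<Rightarrow> ptree set" where
  "P_n0 n = {T. plane_tree_on n T \<and> no_improper T}"

definition increasing_ptree :: "ptree \<Rightarrow> bool" where
  "increasing_ptree T \<longleftrightarrow> (\<forall>N\<in>set (nodes T). \<forall>c\<in>set (children N). root N < root c)"

text \<open>(Non-plane) rooted trees on [n], encoded by root r and parent map p:
  p is defined (in [n]) exactly on the non-root vertices, is 0 elsewhere, and
  every vertex reaches the root by iterating p.\<close>
definition rooted_tree_on :: "nat \<Rightarrow> nat \<Rightarrow> (nat \<Rightarrow> nat) \<Rightarrow> bool" where
  "rooted_tree_on n r p \<longleftrightarrow> r \<in> {1..n} \<and>
     (\<forall>j \<in> {1..n} - {r}. p j \<in> {1..n}) \<and>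
     (\<forall>j. j \<notin> {1..n} - {r} \<longrightarrow> p j = 0) \<and>
     (\<forall>j \<in> {1..n}. \<exists>m. (p ^^ m) j = r)"

definition increasing_rooted :: "nat \<Rightarrow> nat \<Rightarrow> (nat \<Rightarrow> nat) \<Rightarrow> bool" where
  "increasing_rooted n r p \<longleftrightarrow> (\<forall>j \<in> {1..n} - {r}. p j < j)"

end

theory Submission
  imports Defs "HOL-Library.FuncSet"
begin


lemma labels_nodes: "labels T = map root (nodes T)"
  by (induction T) (simp add: map_concat o_def cong: map_cong)

lemma sum_list_concat': "sum_list (concat xss) = sum_list (map sum_list (xss::'b::comm_monoid_add list list))"
  by (induction xss) auto

definition sumn :: "(ptree \<Rightarrow> 'b::comm_monoid_add) \<Rightarrow> ptree \<Rightarrow> 'b" where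
  "sumn f T = sum_list (map f (nodes T))"

lemma sumn_Node: "sumn f (Node u cs) = f (Node u cs) + sum_list (map (sumn f) cs)"
  by (simp add: sumn_def[abs_def] map_concat sum_list_concat' o_def)

lemma nodes_self: "T \<in> set (nodes T)"
  by (cases T) auto

lemma nodes_trans: "N \<in> set (nodes T) \<Longrightarrow> M \<in> set (nodes N) \<Longrightarrow> M \<in> set (nodes T)"
  by (induction T arbitrary: N) auto

lemma labels_nonempty: "labels T \<noteq> []"
  by (cases T) auto

lemma root_in_labels: "root T \<in> set (labels T)"
  by (cases T) auto

lemma labels_sub: "N \<in> set (nodes T) \<Longrightarrow> set (labels N) \<subseteq> set (labels T)"
  by (auto simp: labels_nodes intro: nodes_trans)

lemma child_nodes: "c \<in> set cs \<Longrightarrow> set (nodes c) \<subseteq> set (nodes (Node u cs))"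
  by auto

lemma unique_root:
  assumes "distinct (labels T)" "N \<in> set (nodes T)" "N' \<in> set (nodes T)" "root N = root N'"
  shows "N = N'"
  using assms by (auto simp: labels_nodes distinct_map inj_on_def)

lemma distinct_child:
  assumes "distinct (labels (Node u cs))" "c \<in> set cs"
  shows "distinct (labels c)" "u \<notin> set (labels c)"
  using assms by (auto simp: distinct_concat_iff)

lemma distinct_sibling:
  assumes "distinct (labels (Node u cs))" "cs = xs @ c # ys" "d \<in> set xs \<union> set ys"
  shows "set (labels c) \<inter> set (labels d) = {}"
  using assms by (auto simp: distinct_concat_iff)

fun cnt :: "nat list \<Rightarrow> nat" where
  "cnt [] = 0"
| "cnt (b#bs) = (if \<exists>d\<in>set bs. d < b then 1 else 0) + cnt bs"

fun okl :: "nat \<Rightarrow> nat list \<Rightarrow> bool" where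
  "okl u [] = True"
| "okl u (b#bs) = (((\<exists>d\<in>set bs. d < b) \<or> u < b) \<and> okl u bs)"

definition E :: "nat list \<Rightarrow> nat \<Rightarrow> bool" where
  "E bs a \<longleftrightarrow> (\<exists>b. a < b \<and> b < length bs \<and> bs!b < bs!a)"

lemma E_Cons_0: "E (b#bs) 0 \<longleftrightarrow> (\<exists>d\<in>set bs. d < b)"
proof
  assume "E (b#bs) 0"
  then obtain j where "0 < j" "j < Suc (length bs)" "(b#bs)!j < b" unfolding E_def by auto
  then show "\<exists>d\<in>set bs. d < b"
    by (metis Suc_less_eq Suc_pred nth_Cons_Suc nth_mem)
next
  assume "\<exists>d\<in>set bs. d < b"
  then obtain j where "j < length bs" "bs!j < b" by (auto simp: in_set_conv_nth)
  then show "E (b#bs) 0" unfolding E_def by (intro exI[of _ "Suc j"]) auto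
qed

lemma E_Cons_Suc: "E (b#bs) (Suc a) \<longleftrightarrow> E bs a"
proof
  assume "E (b#bs) (Suc a)"
  then obtain j where "Suc a < j" "j < Suc (length bs)" "(b#bs)!j < (b#bs)!Suc a" unfolding E_def by auto
  then show "E bs a" unfolding E_def
    by (intro exI[of _ "j - 1"]) (cases j; auto)
next
  assume "E bs a"
  then obtain j where "a < j" "j < length bs" "bs!j < bs!a" unfolding E_def by auto
  then show "E (b#bs) (Suc a)" unfolding E_def by (intro exI[of _ "Suc j"]) auto
qed

lemma cnt_card: "card {a. a < length bs \<and> E bs a} = cnt bs"
proof (induction bs)
  case Nil
  then show ?case by simp
next
  case (Cons b bs)
  have eq: "{a. a < length (b#bs) \<and> E (b#bs) a} = {a::nat. a = 0 \<and> E (b#bs) 0} \<union> Suc ` {a. a < length bs \<and> E bs a}"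
    apply (rule set_eqI)
    subgoal for x by (cases x) (auto simp: E_Cons_Suc)
    done
  have "card ({a::nat. a = 0 \<and> E (b#bs) 0} \<union> Suc ` {a. a < length bs \<and> E bs a})
      = card {a::nat. a = 0 \<and> E (b#bs) 0} + card (Suc ` {a. a < length bs \<and> E bs a})"
  proof (rule card_Un_disjoint)
    show "{a::nat. a = 0 \<and> E (b#bs) 0} \<inter> Suc ` {a. a < length bs \<and> E bs a} = {}" by blast
  qed auto
  also have "card (Suc ` {a. a < length bs \<and> E bs a}) = cnt bs"
    using Cons by (simp add: card_image)
  also have "card {a::nat. a = 0 \<and> E (b#bs) 0} = (if \<exists>d\<in>set bs. d < b then 1 else 0)"
    by (simp add: E_Cons_0)
  finally show ?case using eq by simp
qed

lemma okl_iff: "(\<forall>a<length bs. E bs a \<or> u < bs!a) \<longleftrightarrow> okl u bs"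
proof (induction bs)
  case Nil
  then show ?case by simp
next
  case (Cons b bs)
  then show ?case by (simp add: All_less_Suc2 E_Cons_Suc E_Cons_0)
qed

lemma cnt_le: "cnt bs \<le> length bs"
  by (induction bs) auto

lemma cnt_ins: "\<forall>d\<in>set (xs @ ys). d < m \<Longrightarrow> cnt (xs @ m # ys) = cnt (xs @ ys) + (if ys = [] then 0 else 1)"
proof (induction xs)
  case Nil
  then show ?case by (cases ys) auto
next
  case (Cons x xs)
  then show ?case by auto
qed

lemma okl_ins: "u < m \<Longrightarrow> \<forall>d\<in>set (xs @ ys). d < m \<Longrightarrow> okl u (xs @ m # ys) = okl u (xs @ ys)"
proof (induction xs)
  case Nil
  then show ?case by (cases ys) auto
next
  case (Cons x xs)
  then show ?case by auto
qed

lemma elder_E: "a < length cs \<Longrightarrow> elder_at cs a = E (map beta cs) a"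
  unfolding elder_at_def E_def by auto

lemma eld_node_cnt: "eld_node N = cnt (map beta (children N))"
proof -
  have "{a. a < length (children N) \<and> elder_at (children N) a}
      = {a. a < length (map beta (children N)) \<and> E (map beta (children N)) a}"
    using elder_E by auto
  then show ?thesis unfolding eld_node_def by (metis length_map cnt_card)
qed

lemma no_improper_okl: "no_improper T \<longleftrightarrow> (\<forall>N\<in>set (nodes T). okl (root N) (map beta (children N)))"
proof -
  have "\<And>N. (\<forall>a<length (children N). elder_at (children N) a \<or> root N < beta (children N ! a))
     \<longleftrightarrow> okl (root N) (map beta (children N))"
    by (simp add: okl_iff[symmetric] elder_E)
  then show ?thesis unfolding no_improper_def by simp
qed

lemma eld_sumn: "eld T = sumn eld_node T"
  by (simp add: eld_def sumn_def)

lemma young_sumn: "young T w = sumn (\<lambda>N. if root N = w then length (children N) - eld_node N else 0) T"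
  by (simp add: young_def sumn_def)



definition ins_at :: "nat \<Rightarrow> 'a \<Rightarrow> 'a list \<Rightarrow> 'a list" where
  "ins_at i x xs = take i xs @ x # drop i xs"

lemma set_ins_at[simp]: "set (ins_at i x xs) = insert x (set xs)"
proof -
  have "set xs = set (take i xs) \<union> set (drop i xs)"
    by (metis append_take_drop_id set_append)
  then show ?thesis unfolding ins_at_def by auto
qed

lemma length_ins_at[simp]: "length (ins_at i x xs) = Suc (length xs)"
  unfolding ins_at_def by simp

lemma map_ins_at: "map f (ins_at i x xs) = ins_at i (f x) (map f xs)"
  unfolding ins_at_def by (simp add: take_map drop_map)

lemma sum_list_ins_at: "sum_list (ins_at i x xs) = x + sum_list (xs :: 'a::comm_monoid_add list)"
proof -
  have "sum_list xs = sum_list (take i xs) + sum_list (drop i xs)"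
    by (metis append_take_drop_id sum_list_append)
  then show ?thesis unfolding ins_at_def by (simp add: algebra_simps)
qed

lemma filter_ins_at: "\<forall>y\<in>set xs. y \<noteq> x \<Longrightarrow> filter (\<lambda>y. y \<noteq> x) (ins_at i x xs) = xs"
proof -
  assume a: "\<forall>y\<in>set xs. y \<noteq> x"
  have "filter (\<lambda>y. y \<noteq> x) (take i xs) = take i xs" "filter (\<lambda>y. y \<noteq> x) (drop i xs) = drop i xs"
    using a by (auto simp: filter_id_conv dest: in_set_takeD in_set_dropD)
  then show ?thesis unfolding ins_at_def by simp
qed

fun ins :: "nat \<Rightarrow> nat \<Rightarrow> nat \<Rightarrow> ptree \<Rightarrow> ptree" where
  "ins m v i (Node u cs) = Node u (if u = v then ins_at i (Node m []) (map (ins m v i) cs) else map (ins m v i) cs)"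

fun del :: "nat \<Rightarrow> ptree \<Rightarrow> ptree" where
  "del m (Node u cs) = Node u (map (del m) (filter (\<lambda>c. c \<noteq> Node m []) cs))"

lemma root_ins[simp]: "root (ins m v i T) = root T"
  by (cases T) auto

lemma children_ins: "children (ins m v i N) = (if root N = v then ins_at i (Node m []) (map (ins m v i) (children N)) else map (ins m v i) (children N))"
  by (cases N) auto

lemma labels_ins: "set (labels (ins m v i T)) = set (labels T) \<union> (if v \<in> set (labels T) then {m} else {})"
  by (induction T) (auto split: if_splits)

lemma ins_id: "v \<notin> set (labels T) \<Longrightarrow> ins m v i T = T"
  by (induction T) (auto intro: map_idI)

lemma length_labels_ins: "length (labels (ins m v i T)) = length (labels T) + count_list (labels T) v"
proof (induction T)
  case (Node u cs)
  have "sum_list (map (length \<circ> labels \<circ> ins m v i) cs) = sum_list (map (length \<circ> labels) cs) + sum_list (map (\<lambda>c. count_list (labels c) v) cs)"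
    using Node by (induction cs) auto
  then show ?case
    by (auto simp: length_concat count_list_concat map_ins_at sum_list_ins_at o_def)
qed

lemma beta_ins:
  assumes "\<forall>l\<in>set (labels T). l < m"
  shows "beta (ins m v i T) = beta T"
proof (cases "v \<in> set (labels T)")
  case True
  have ne: "set (labels T) \<noteq> {}" using labels_nonempty by auto
  have "Min (set (labels T)) < m" using assms ne by simp
  then have "Min (insert m (set (labels T))) = Min (set (labels T))"
    using ne by (simp add: Min_insert)
  then show ?thesis using True unfolding beta_def by (simp add: labels_ins)
next
  case False
  then show ?thesis by (simp add: ins_id)
qed

lemma beta_le_root: "beta T \<le> root T"
  unfolding beta_def using root_in_labels by simp

lemma beta_in: "beta T \<in> set (labels T)"
  unfolding beta_def using labels_nonempty by simp

lemma map_beta_children_ins: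
  assumes "\<forall>l\<in>set (labels N). l < m"
  shows "map beta (children (ins m v i N)) = (if root N = v then ins_at i m (map beta (children N)) else map beta (children N))"
proof -
  have h1: "map (beta \<circ> ins m v i) (children N) = map beta (children N)"
    using assms by (cases N) (auto intro!: beta_ins)
  have h2: "beta (Node m []) = m" by (simp add: beta_def)
  show ?thesis
  proof (cases "root N = v")
    case True
    then have "children (ins m v i N) = ins_at i (Node m []) (map (ins m v i) (children N))"
      by (simp add: children_ins)
    then have "map beta (children (ins m v i N)) = ins_at i m (map beta (children N))"
      by (simp only: map_ins_at map_map h1 h2)
    then show ?thesis using True by simp
  next
    case False
    then have "children (ins m v i N) = map (ins m v i) (children N)"
      by (simp add: children_ins)
    then have "map beta (children (ins m v i N)) = map beta (children N)"
      by (simp only: map_map h1)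
    then show ?thesis using False by simp
  qed
qed

lemma map_root_children_ins:
  "map root (children (ins m v i N)) = (if root N = v then ins_at i m (map root (children N)) else map root (children N))"
  by (simp add: children_ins map_ins_at o_def)

lemma beta_children_lt:
  assumes "\<forall>l\<in>set (labels N). l < m"
  shows "\<forall>d\<in>set (map beta (children N)). d < m"
  using assms beta_in by (cases N) auto

lemma eld_node_ins:
  assumes "\<forall>l\<in>set (labels N). l < m"
  shows "eld_node (ins m v i N) = eld_node N + (if root N = v \<and> i < length (children N) then 1 else 0)"
proof (cases "root N = v")
  case True
  let ?bs = "map beta (children N)"
  have "cnt (ins_at i m ?bs) = cnt (take i ?bs @ drop i ?bs) + (if drop i ?bs = [] then 0 else 1)"
    unfolding ins_at_def
    by (rule cnt_ins) (metis append_take_drop_id beta_children_lt[OF assms])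
  then show ?thesis using True
    by (simp add: eld_node_cnt map_beta_children_ins[OF assms])
next
  case False
  then show ?thesis by (simp add: eld_node_cnt map_beta_children_ins[OF assms])
qed

lemma sumn_ins:
  fixes f g :: "ptree \<Rightarrow> 'b::comm_monoid_add"
  assumes "\<forall>l\<in>set (labels T). l < m"
    and "\<And>N. N \<in> set (nodes T) \<Longrightarrow> f (ins m v i N) = f N + g N"
    and "f (Node m []) = 0"
  shows "sumn f (ins m v i T) = sumn f T + sumn g T"
  using assms
proof (induction T)
  case (Node u cs)
  have IH: "sumn f (ins m v i c) = sumn f c + sumn g c" if "c \<in> set cs" for c
    using Node.prems that by (intro Node.IH) auto
  have top: "f (ins m v i (Node u cs)) = f (Node u cs) + g (Node u cs)"
    using Node.prems(2)[OF nodes_self] .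
  have s: "sum_list (map (sumn f \<circ> ins m v i) cs) = sum_list (map (sumn f) cs) + sum_list (map (sumn g) cs)"
    using IH by (induction cs) (auto simp: algebra_simps)
  have z: "sumn f (Node m []) = 0" using Node.prems by (simp add: sumn_Node)
  have "sumn f (ins m v i (Node u cs)) = f (ins m v i (Node u cs)) + sum_list (map (sumn f \<circ> ins m v i) cs)"
  proof (cases "u = v")
    case True
    have "ins m v i (Node u cs) = Node u (ins_at i (Node m []) (map (ins m v i) cs))" using True by simp
    then show ?thesis by (simp only: sumn_Node map_ins_at sum_list_ins_at map_map z) (simp add: Node.prems(3))
  next
    case False
    have "ins m v i (Node u cs) = Node u (map (ins m v i) cs)" using False by simp
    then show ?thesis by (simp only: sumn_Node map_map)
  qed
  also have "\<dots> = sumn f (Node u cs) + sumn g (Node u cs)"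
    by (simp only: top s sumn_Node) (simp add: algebra_simps)
  finally show ?case .
qed



lemma nodes_ins: "set (nodes (ins m v i T)) = ins m v i ` set (nodes T) \<union> (if v \<in> set (labels T) then {Node m []} else {})"
  by (induction T) (auto split: if_splits)

lemma okl_ins_at: "u < m \<Longrightarrow> \<forall>d\<in>set bs. d < m \<Longrightarrow> okl u (ins_at i m bs) = okl u bs"
  unfolding ins_at_def by (subst okl_ins) (auto dest: in_set_takeD in_set_dropD)

lemma no_improper_ins:
  assumes lt: "\<forall>l\<in>set (labels T). l < m"
  shows "no_improper (ins m v i T) \<longleftrightarrow> no_improper T"
proof -
  have "okl (root N) (map beta (children (ins m v i N))) \<longleftrightarrow> okl (root N) (map beta (children N))"
    if N: "N \<in> set (nodes T)" for N
  proof -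
    have ltN: "\<forall>l\<in>set (labels N). l < m" using lt labels_sub[OF N] by auto
    have "root N < m" using ltN root_in_labels by auto
    then show ?thesis
      using okl_ins_at[OF _ beta_children_lt[OF ltN]] by (simp add: map_beta_children_ins[OF ltN])
  qed
  then show ?thesis unfolding no_improper_okl nodes_ins by auto
qed

lemma incr_nodes: "increasing_ptree T \<longleftrightarrow> (\<forall>N\<in>set (nodes T). \<forall>r\<in>set (map root (children N)). root N < r)"
  unfolding increasing_ptree_def by auto

lemma incr_ins:
  assumes lt: "\<forall>l\<in>set (labels T). l < m"
  shows "increasing_ptree (ins m v i T) \<longleftrightarrow> increasing_ptree T"
proof -
  have "(\<forall>r\<in>set (map root (children (ins m v i N))). root N < r) \<longleftrightarrow> (\<forall>r\<in>set (map root (children N)). root N < r)"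
    if N: "N \<in> set (nodes T)" for N
  proof -
    have ltN: "\<forall>l\<in>set (labels N). l < m" using lt labels_sub[OF N] by auto
    have "root N < m" using ltN root_in_labels by auto
    then show ?thesis unfolding map_root_children_ins by auto
  qed
  then show ?thesis unfolding incr_nodes nodes_ins by auto
qed

lemma eld_ins:
  assumes lt: "\<forall>l\<in>set (labels T). l < m"
  shows "eld (ins m v i T) = eld T + sumn (\<lambda>N. if root N = v \<and> i < length (children N) then 1 else 0) T"
  unfolding eld_sumn
proof (rule sumn_ins[OF lt])
  fix N assume N: "N \<in> set (nodes T)"
  have ltN: "\<forall>l\<in>set (labels N). l < m" using lt labels_sub[OF N] by auto
  show "eld_node (ins m v i N) = eld_node N + (if root N = v \<and> i < length (children N) then 1 else 0)"
    by (rule eld_node_ins[OF ltN])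
qed (simp add: eld_node_cnt)

lemma eld_node_le: "eld_node N \<le> length (children N)"
  by (metis cnt_le eld_node_cnt length_map)

lemma young_ins:
  assumes lt: "\<forall>l\<in>set (labels T). l < m"
  shows "young (ins m v i T) w = young T w + sumn (\<lambda>N. if root N = w \<and> root N = v \<and> length (children N) \<le> i then 1 else 0) T"
  unfolding young_sumn
proof (rule sumn_ins[OF lt])
  fix N assume N: "N \<in> set (nodes T)"
  have ltN: "\<forall>l\<in>set (labels N). l < m" using lt labels_sub[OF N] by auto
  have e: "eld_node (ins m v i N) = eld_node N + (if root N = v \<and> i < length (children N) then 1 else 0)"
    by (rule eld_node_ins[OF ltN])
  have le: "eld_node N \<le> length (children N)" by (rule eld_node_le)
  show "(if root (ins m v i N) = w then length (children (ins m v i N)) - eld_node (ins m v i N) else 0) =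
      (if root N = w then length (children N) - eld_node N else 0) +
      (if root N = w \<and> root N = v \<and> length (children N) \<le> i then 1 else 0)"
    using e le by (auto simp: children_ins)
qed (simp add: eld_node_cnt)

lemma filter_unique:
  assumes "distinct (map root xs)" "N \<in> set xs"
  shows "filter (\<lambda>N'. root N' = root N) xs = [N]"
  using assms
proof (induction xs)
  case Nil then show ?case by simp
next
  case (Cons x xs)
  show ?case
  proof (cases "x = N")
    case True
    have "\<forall>y\<in>set xs. root y \<noteq> root N"
    proof
      fix y assume y: "y \<in> set xs"
      show "root y \<noteq> root N"
      proof
        assume "root y = root N"
        then have "root N \<in> set (map root xs)" using y by (metis image_eqI set_map)
        then show False using Cons.prems True by simp
      qed
    qed
    then have "filter (\<lambda>N'. root N' = root N) xs = []"
      by (auto simp: filter_empty_conv)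
    then show ?thesis using True by simp
  next
    case False
    then have "root x \<noteq> root N" using Cons.prems by auto
    then show ?thesis using Cons False by auto
  qed
qed

lemma sum_list_if_filter: "sum_list (map (\<lambda>x. if P x then h x else 0) xs) = sum_list (map h (filter P xs))"
  by (induction xs) auto

lemma sumn_unique:
  assumes "distinct (labels T)" "N \<in> set (nodes T)"
  shows "sumn (\<lambda>N'. if root N' = root N then h N' else (0::'b::comm_monoid_add)) T = h N"
  using filter_unique[of "nodes T" N] assms
  by (simp add: sumn_def sum_list_if_filter labels_nodes)

lemma sum_list_zero: "(\<forall>x\<in>set xs. f x = 0) \<Longrightarrow> sum_list (map f xs) = (0::'b::comm_monoid_add)"
  by (induction xs) auto

lemma sumn_zero: "(\<And>N. N \<in> set (nodes T) \<Longrightarrow> f N = 0) \<Longrightarrow> sumn f T = 0"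
  unfolding sumn_def by (rule sum_list_zero) auto

lemma labels_L: "labels (Node m []) = [m]" by simp

lemma del_id: "m \<notin> set (labels T) \<Longrightarrow> del m T = T"
proof (induction T)
  case (Node u cs)
  have "filter (\<lambda>c. c \<noteq> Node m []) cs = cs"
    using Node.prems by (auto simp: filter_id_conv)
  moreover have "map (del m) cs = cs"
    using Node by (auto intro: map_idI)
  ultimately show ?case by simp
qed

lemma del_ins: "m \<notin> set (labels T) \<Longrightarrow> del m (ins m v i T) = T"
proof (induction T)
  case (Node u cs)
  have ne: "\<forall>y\<in>set (map (ins m v i) cs). y \<noteq> Node m []"
  proof
    fix y assume "y \<in> set (map (ins m v i) cs)"
    then obtain c where "c \<in> set cs" "y = ins m v i c" by auto
    then have "root y \<noteq> m" using Node.prems root_in_labels[of c] by auto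
    then show "y \<noteq> Node m []" by auto
  qed
  then have f: "filter (\<lambda>c. c \<noteq> Node m []) (map (ins m v i) cs) = map (ins m v i) cs"
    by (simp add: filter_id_conv)
  have "map (del m) (map (ins m v i) cs) = cs"
    using Node by (auto intro: map_idI)
  then show ?case using f filter_ins_at[OF ne] by simp
qed

lemma labels_del_sub: "set (labels (del m T)) \<subseteq> set (labels T)"
  by (induction T) auto

lemma removeAll_concat: "removeAll x (concat xss) = concat (map (removeAll x) xss)"
  by (induction xss) auto

lemma concat_filter_nil: "f L = [] \<Longrightarrow> concat (map f (filter (\<lambda>c. c \<noteq> L) cs)) = concat (map f cs)"
  by (induction cs) auto

lemma labels_del:
  "(\<forall>N\<in>set (nodes T). root N = m \<longrightarrow> children N = []) \<Longrightarrow> root T \<noteq> m \<Longrightarrow> labels (del m T) = removeAll m (labels T)"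
proof (induction T)
  case (Node u cs)
  have IH: "labels (del m c) = removeAll m (labels c)" if "c \<in> set (filter (\<lambda>c. c \<noteq> Node m []) cs)" for c
  proof (rule Node.IH)
    show c: "c \<in> set cs" using that by auto
    show "\<forall>N\<in>set (nodes c). root N = m \<longrightarrow> children N = []" using Node.prems c by auto
    show "root c \<noteq> m"
    proof
      assume "root c = m"
      then have "children c = []" using Node.prems c nodes_self[of c] by auto
      then have "c = Node m []" using \<open>root c = m\<close> by (cases c) auto
      then show False using that by auto
    qed
  qed
  have "labels (del m (Node u cs)) = u # concat (map (labels \<circ> del m) (filter (\<lambda>c. c \<noteq> Node m []) cs))"
    by simp
  also have "\<dots> = u # concat (map (removeAll m \<circ> labels) (filter (\<lambda>c. c \<noteq> Node m []) cs))"
  proof -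
    have "map (labels \<circ> del m) (filter (\<lambda>c. c \<noteq> Node m []) cs) = map (removeAll m \<circ> labels) (filter (\<lambda>c. c \<noteq> Node m []) cs)"
    proof (rule map_cong[OF refl])
      fix c assume c: "c \<in> set (filter (\<lambda>c. c \<noteq> Node m []) cs)"
      show "(labels \<circ> del m) c = (removeAll m \<circ> labels) c" using IH[OF c] by simp
    qed
    then show ?thesis by (rule arg_cong[where f="\<lambda>x. u # concat x"])
  qed
  also have "\<dots> = u # concat (map (removeAll m \<circ> labels) cs)"
    by (subst concat_filter_nil) auto
  also have "\<dots> = removeAll m (labels (Node u cs))"
    using Node.prems by (simp add: removeAll_concat map_map)
  finally show ?case .
qed



lemma ins_at_append: "ins_at (length xs) x (xs @ ys) = xs @ x # ys"
  unfolding ins_at_def by simp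

lemma exists_pos:
  assumes "distinct (labels T)" "Node m [] \<in> set (nodes T)" "root T \<noteq> m"
  shows "\<exists>N\<in>set (nodes (del m T)). \<exists>i\<le>length (children N). T = ins m (root N) i (del m T)"
  using assms
proof (induction T)
  case (Node u cs)
  let ?L = "Node m []"
  have um: "u \<noteq> m" using Node.prems by simp
  show ?case
  proof (cases "?L \<in> set cs")
    case True
    then obtain xs ys where cs: "cs = xs @ ?L # ys" by (meson split_list)
    have oth: "m \<notin> set (labels d) \<and> u \<notin> set (labels d) \<and> d \<noteq> ?L" if d: "d \<in> set xs \<union> set ys" for d
    proof -
      have "set (labels ?L) \<inter> set (labels d) = {}"
        by (rule distinct_sibling[OF Node.prems(1) cs d])
      moreover have "u \<notin> set (labels d)"
        using distinct_child(2)[OF Node.prems(1)] d cs by auto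
      ultimately show ?thesis by auto
    qed
    have f: "filter (\<lambda>c. c \<noteq> ?L) cs = xs @ ys"
      using oth by (auto simp: cs filter_id_conv)
    have dl: "map (del m) (xs @ ys) = xs @ ys"
      using oth by (auto intro!: map_idI del_id)
    have dT: "del m (Node u cs) = Node u (xs @ ys)"
      using f dl by simp
    have il: "map (ins m u (length xs)) (xs @ ys) = xs @ ys"
      using oth by (auto intro!: map_idI ins_id)
    have "ins m u (length xs) (Node u (xs @ ys)) = Node u cs"
      using il by (simp add: ins_at_append cs del: ins.simps) (simp add: ins_at_append cs)
    then show ?thesis
      using dT by (intro bexI[of _ "Node u (xs @ ys)"]) (auto intro!: exI[of _ "length xs"])
  next
    case False
    from Node.prems(2,3) obtain c where c: "c \<in> set cs" "?L \<in> set (nodes c)" by auto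
    then obtain xs ys where cs: "cs = xs @ c # ys" by (meson split_list)
    have dc: "distinct (labels c)" "u \<notin> set (labels c)"
      using distinct_child[OF Node.prems(1) c(1)] by auto
    have mc: "m \<in> set (labels c)" using labels_sub[OF c(2)] by auto
    have rc: "root c \<noteq> m"
    proof
      assume "root c = m"
      then have "c = ?L" using unique_root[OF dc(1) nodes_self c(2)] by simp
      then show False using False c by simp
    qed
    obtain N i where N: "N \<in> set (nodes (del m c))" "i \<le> length (children N)" "c = ins m (root N) i (del m c)"
      using Node.IH[OF c(1) dc(1) c(2) rc] by blast
    have rNc: "root N \<in> set (labels c)"
      using labels_sub[OF N(1)] root_in_labels[of N] labels_del_sub[of m c] by auto
    have oth: "m \<notin> set (labels d) \<and> root N \<notin> set (labels d)" if d: "d \<in> set xs \<union> set ys" for d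
      using distinct_sibling[OF Node.prems(1) cs d] mc rNc by auto
    have f: "filter (\<lambda>c. c \<noteq> ?L) cs = cs" using False by (auto simp: filter_id_conv)
    have dT: "del m (Node u cs) = Node u (map (del m) cs)" using f by simp
    have rNu: "root N \<noteq> u" using rNc dc(2) by auto
    have mm: "map (ins m (root N) i \<circ> del m) cs = cs"
    proof (rule map_idI)
      fix x assume x: "x \<in> set cs"
      show "(ins m (root N) i \<circ> del m) x = x"
      proof (cases "x \<in> set xs \<union> set ys")
        case True
        then show ?thesis using oth[OF True] by (simp add: del_id ins_id)
      next
        case False
        then have "x = c" using x cs by auto
        then show ?thesis using N(3) by simp
      qed
    qed
    have "ins m (root N) i (del m (Node u cs)) = Node u cs"
      using dT rNu mm by simp
    moreover have "N \<in> set (nodes (del m (Node u cs)))"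
      using dT N(1) c(1) by auto
    ultimately show ?thesis using N(2) by metis
  qed
qed

lemma nth_ins_at_self: "i \<le> length xs \<Longrightarrow> ins_at i x xs ! i = x"
  unfolding ins_at_def by (simp add: nth_append)

lemma nth_ins_at_before: "k < j \<Longrightarrow> j \<le> length xs \<Longrightarrow> ins_at j x xs ! k = xs ! k"
  unfolding ins_at_def by (simp add: nth_append)

lemma ins_at_inj:
  assumes "x \<notin> set xs" "i \<le> length xs" "j \<le> length xs" "ins_at i x xs = ins_at j x xs"
  shows "i = j"
proof (rule ccontr)
  assume "i \<noteq> j"
  then consider "i < j" | "j < i" by linarith
  then show False
  proof cases
    case 1
    have "ins_at j x xs ! i = xs ! i" using nth_ins_at_before[OF 1 assms(3)] .
    moreover have "ins_at i x xs ! i = x" using nth_ins_at_self[OF assms(2)] .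
    moreover have "xs ! i \<in> set xs" using 1 assms(3) by simp
    ultimately show False using assms(1,4) by metis
  next
    case 2
    have "ins_at i x xs ! j = xs ! j" using nth_ins_at_before[OF 2 assms(2)] .
    moreover have "ins_at j x xs ! j = x" using nth_ins_at_self[OF assms(3)] .
    moreover have "xs ! j \<in> set xs" using 2 assms(2) by simp
    ultimately show False using assms(1,4) by metis
  qed
qed

lemma ins_inj_pos:
  assumes "distinct (labels T)" "m \<notin> set (labels T)"
    "N1 \<in> set (nodes T)" "N2 \<in> set (nodes T)" "i1 \<le> length (children N1)" "i2 \<le> length (children N2)"
    "ins m (root N1) i1 T = ins m (root N2) i2 T"
  shows "N1 = N2 \<and> i1 = i2"
  using assms
proof (induction T arbitrary: N1 N2)
  case (Node u cs)
  let ?T = "Node u cs"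
  let ?L = "Node m []"
  have cid: "map (ins m u j) cs = cs" for j
    using distinct_child(2)[OF Node.prems(1)] by (auto intro!: map_idI ins_id)
  have Lnot: "?L \<notin> set cs" using Node.prems(2) by auto
  show ?case
  proof (cases "root N1 = u")
    case r1: True
    then have N1: "N1 = ?T" using unique_root[OF Node.prems(1) Node.prems(3) nodes_self] by simp
    show ?thesis
    proof (cases "root N2 = u")
      case True
      then have N2: "N2 = ?T" using unique_root[OF Node.prems(1) Node.prems(4) nodes_self] by simp
      have "ins_at i1 ?L cs = ins_at i2 ?L cs"
        using Node.prems(7) r1 True cid by simp
      then have "i1 = i2" using ins_at_inj[OF Lnot] Node.prems(5,6) N1 N2 by simp
      then show ?thesis using N1 N2 by simp
    next
      case False
      have "length (children (ins m (root N1) i1 ?T)) = Suc (length cs)" using r1 by simp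
      moreover have "length (children (ins m (root N2) i2 ?T)) = length cs" using False by simp
      ultimately show ?thesis using Node.prems(7) by simp
    qed
  next
    case r1: False
    show ?thesis
    proof (cases "root N2 = u")
      case True
      have "length (children (ins m (root N2) i2 ?T)) = Suc (length cs)" using True by simp
      moreover have "length (children (ins m (root N1) i1 ?T)) = length cs" using r1 by simp
      ultimately show ?thesis using Node.prems(7) by simp
    next
      case r2: False
      have eqm: "map (ins m (root N1) i1) cs = map (ins m (root N2) i2) cs"
        using Node.prems(7) r1 r2 by simp
      have "N1 \<noteq> ?T" using r1 by auto
      then obtain c where c: "c \<in> set cs" "N1 \<in> set (nodes c)" using Node.prems(3) by auto
      have dc: "distinct (labels c)" using distinct_child[OF Node.prems(1) c(1)] by auto
      have mc: "m \<notin> set (labels c)" using Node.prems(2) c(1) by auto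
      have eqc: "ins m (root N1) i1 c = ins m (root N2) i2 c"
        using eqm c(1) by (simp add: map_eq_conv)
      have "root N1 \<in> set (labels c)" using labels_sub[OF c(2)] root_in_labels[of N1] by auto
      then have "m \<in> set (labels (ins m (root N1) i1 c))" by (simp add: labels_ins)
      then have "m \<in> set (labels (ins m (root N2) i2 c))" using eqc by simp
      then have "root N2 \<in> set (labels c)" using mc by (simp add: labels_ins split: if_splits)
      then obtain N2' where N2': "N2' \<in> set (nodes c)" "root N2' = root N2"
        by (auto simp: labels_nodes)
      have "N2' \<in> set (nodes ?T)" using N2' c(1) by auto
      then have "N2' = N2" using unique_root[OF Node.prems(1) _ Node.prems(4) N2'(2)] by simp
      then show ?thesis
        using Node.IH[OF c(1) dc mc c(2) _ Node.prems(5,6) eqc] N2' by simp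
    qed
  qed
qed



definition S :: "(ptree \<Rightarrow> bool) \<Rightarrow> nat \<Rightarrow> ptree set" where
  "S P n = {T. plane_tree_on n T \<and> P T}"

definition Dom :: "(ptree \<Rightarrow> bool) \<Rightarrow> nat \<Rightarrow> (ptree \<times> ptree \<times> nat) set" where
  "Dom P n = (SIGMA T:S P n. SIGMA N:set (nodes T). {..length (children N)})"

definition g :: "nat \<Rightarrow> ptree \<times> ptree \<times> nat \<Rightarrow> ptree" where
  "g m = (\<lambda>(T, N, i). ins m (root N) i T)"

lemma count_list_distinct: "distinct xs \<Longrightarrow> x \<in> set xs \<Longrightarrow> count_list xs x = 1"
  by (induction xs) auto

lemma plane_length: "plane_tree_on n T \<Longrightarrow> length (labels T) = n"
  unfolding plane_tree_on_def using distinct_card[of "labels T"] by simp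

lemma S_image:
  assumes P1: "\<And>T m v i. \<forall>l\<in>set (labels T). l < m \<Longrightarrow> P (ins m v i T) = P T"
    and P2: "\<And>T N. P T \<Longrightarrow> N \<in> set (nodes T) \<Longrightarrow> \<forall>l\<in>set (labels T). l \<le> root N \<Longrightarrow> children N = []"
    and n: "1 \<le> n"
  shows "S P (Suc n) = g (Suc n) ` Dom P n"
proof
  show "g (Suc n) ` Dom P n \<subseteq> S P (Suc n)"
  proof
    fix T' assume "T' \<in> g (Suc n) ` Dom P n"
    then obtain T N i where T: "T \<in> S P n" and N: "N \<in> set (nodes T)" and i: "i \<le> length (children N)"
      and T': "T' = ins (Suc n) (root N) i T"
      unfolding Dom_def g_def by auto
    have pt: "plane_tree_on n T" "P T" using T unfolding S_def by auto
    have lt: "\<forall>l\<in>set (labels T). l < Suc n" using pt(1) unfolding plane_tree_on_def by auto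
    have rN: "root N \<in> set (labels T)" using labels_sub[OF N] root_in_labels[of N] by auto
    have "P T'" using P1[OF lt] pt(2) T' by simp
    moreover have set': "set (labels T') = {1..Suc n}"
      using pt(1) rN unfolding T' plane_tree_on_def by (auto simp: labels_ins)
    moreover have "length (labels T') = Suc n"
      using pt(1) rN plane_length[OF pt(1)] count_list_distinct[of "labels T" "root N"]
      unfolding T' plane_tree_on_def by (simp add: length_labels_ins)
    ultimately show "T' \<in> S P (Suc n)"
      unfolding S_def plane_tree_on_def by (auto intro: card_distinct)
  qed
next
  show "S P (Suc n) \<subseteq> g (Suc n) ` Dom P n"
  proof
    fix T assume T: "T \<in> S P (Suc n)"
    let ?m = "Suc n"
    let ?L = "Node ?m []"
    have pt: "distinct (labels T)" "set (labels T) = {1..?m}" "P T" using T unfolding S_def plane_tree_on_def by auto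
    have "?m \<in> set (labels T)" using pt(2) by simp
    then have "?m \<in> root ` set (nodes T)" by (simp add: labels_nodes)
    then obtain Nm where Nm: "Nm \<in> set (nodes T)" "root Nm = ?m" by auto
    have "children Nm = []"
      using P2[OF pt(3) Nm(1)] pt(2) Nm(2) by auto
    then have NmL: "Nm = ?L" using Nm(2) by (cases Nm) auto
    have leaf: "\<forall>N\<in>set (nodes T). root N = ?m \<longrightarrow> children N = []"
    proof (intro ballI impI)
      fix N assume N: "N \<in> set (nodes T)" "root N = ?m"
      then have "N = Nm" using unique_root[OF pt(1) N(1) Nm(1)] Nm(2) by simp
      then show "children N = []" using NmL by simp
    qed
    have rT: "root T \<noteq> ?m"
    proof
      assume "root T = ?m"
      then have "T = ?L" using unique_root[OF pt(1) nodes_self Nm(1)] Nm(2) NmL by simp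
      then have "set (labels T) = {?m}" by simp
      moreover have "1 \<in> {1..?m}" by simp
      ultimately show False using pt(2) n by auto
    qed
    obtain N i where N: "N \<in> set (nodes (del ?m T))" "i \<le> length (children N)" "T = ins ?m (root N) i (del ?m T)"
      using exists_pos[OF pt(1) _ rT] Nm(1) NmL by blast
    have ld: "labels (del ?m T) = removeAll ?m (labels T)"
      by (rule labels_del[OF leaf rT])
    have pt': "plane_tree_on n (del ?m T)"
    proof -
      have "distinct (removeAll ?m (labels T))" by (simp add: removeAll_filter_not_eq pt(1))
      moreover have "set (removeAll ?m (labels T)) = {1..n}" using pt(2) by auto
      ultimately show ?thesis unfolding plane_tree_on_def ld by simp
    qed
    have lt': "\<forall>l\<in>set (labels (del ?m T)). l < ?m"
      using pt' unfolding plane_tree_on_def by auto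
    have "P (del ?m T)" using P1[OF lt', of "root N" i] N(3) pt(3) by simp
    then have "(del ?m T, N, i) \<in> Dom P n"
      unfolding Dom_def S_def using pt' N(1,2) by auto
    moreover have "T = g ?m (del ?m T, N, i)" unfolding g_def using N(3) by simp
    ultimately show "T \<in> g (Suc n) ` Dom P n" by blast
  qed
qed

lemma g_inj: "inj_on (g (Suc n)) (Dom P n)"
proof (rule inj_onI)
  fix a b assume a: "a \<in> Dom P n" and b: "b \<in> Dom P n" and e: "g (Suc n) a = g (Suc n) b"
  obtain T1 N1 i1 where a': "a = (T1, N1, i1)" by (cases a) auto
  obtain T2 N2 i2 where b': "b = (T2, N2, i2)" by (cases b) auto
  have h1: "plane_tree_on n T1" "N1 \<in> set (nodes T1)" "i1 \<le> length (children N1)"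
    using a unfolding a' Dom_def S_def by auto
  have h2: "plane_tree_on n T2" "N2 \<in> set (nodes T2)" "i2 \<le> length (children N2)"
    using b unfolding b' Dom_def S_def by auto
  have m1: "Suc n \<notin> set (labels T1)" using h1(1) unfolding plane_tree_on_def by auto
  have m2: "Suc n \<notin> set (labels T2)" using h2(1) unfolding plane_tree_on_def by auto
  have e': "ins (Suc n) (root N1) i1 T1 = ins (Suc n) (root N2) i2 T2" using e unfolding a' b' g_def by simp
  have "T1 = T2" using del_ins[OF m1] del_ins[OF m2] e' by metis
  then have "N1 = N2 \<and> i1 = i2"
    using ins_inj_pos[of T1 "Suc n" N1 N2 i1 i2] h1 h2 m1 e' unfolding plane_tree_on_def by auto
  then show "a = b" using \<open>T1 = T2\<close> a' b' by simp
qed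

lemma S_one:
  assumes "P (Node 1 [])"
  shows "S P 1 = {Node 1 []}"
proof
  show "{Node 1 []} \<subseteq> S P 1" using assms unfolding S_def plane_tree_on_def by auto
next
  show "S P 1 \<subseteq> {Node 1 []}"
  proof
    fix T assume T: "T \<in> S P 1"
    obtain u cs where Tu: "T = Node u cs" by (cases T)
    have "length (labels T) = 1" using T plane_length unfolding S_def by auto
    then have "concat (map labels cs) = []" using Tu by simp
    then have "cs = []" using labels_nonempty by (cases cs) auto
    moreover have "u = 1" using T Tu unfolding S_def plane_tree_on_def by auto
    ultimately show "T \<in> {Node 1 []}" using Tu by simp
  qed
qed

lemma finite_nodes_Dom: "finite (S P n) \<Longrightarrow> finite (Dom P n)"
  unfolding Dom_def by (intro finite_SigmaI) auto

lemma S_finite: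
  assumes P1: "\<And>T m v i. \<forall>l\<in>set (labels T). l < m \<Longrightarrow> P (ins m v i T) = P T"
    and P2: "\<And>T N. P T \<Longrightarrow> N \<in> set (nodes T) \<Longrightarrow> \<forall>l\<in>set (labels T). l \<le> root N \<Longrightarrow> children N = []"
    and P0: "P (Node 1 [])"
    and n: "1 \<le> n"
  shows "finite (S P n)"
  using n
proof (induction n rule: dec_induct)
  case base
  then show ?case using S_one[of P, OF P0] by simp
next
  case (step k)
  then show ?case using S_image[of P, OF P1 P2 step(1)] finite_nodes_Dom by auto
qed

lemma distinct_nodes: "distinct (labels T) \<Longrightarrow> distinct (nodes T)"
  by (simp add: labels_nodes distinct_map)

lemma sum_Sigma': "finite A \<Longrightarrow> \<forall>x\<in>A. finite (B x) \<Longrightarrow> sum f (Sigma A B) = (\<Sum>x\<in>A. \<Sum>y\<in>B x. f (x,y))"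
  using sum.Sigma[of A B "\<lambda>x y. f (x,y)"] by simp

lemma S_sum:
  fixes w :: "ptree \<Rightarrow> 'b::comm_monoid_add"
  assumes P1: "\<And>T m v i. \<forall>l\<in>set (labels T). l < m \<Longrightarrow> P (ins m v i T) = P T"
    and P2: "\<And>T N. P T \<Longrightarrow> N \<in> set (nodes T) \<Longrightarrow> \<forall>l\<in>set (labels T). l \<le> root N \<Longrightarrow> children N = []"
    and P0: "P (Node 1 [])"
    and n: "1 \<le> n"
  shows "sum w (S P (Suc n)) = (\<Sum>T\<in>S P n. sum_list (map (\<lambda>N. \<Sum>i\<le>length (children N). w (ins (Suc n) (root N) i T)) (nodes T)))"
proof -
  have fin: "finite (S P n)" by (rule S_finite[of P, OF P1 P2 P0 n])
  have "sum w (g (Suc n) ` Dom P n) = sum (w \<circ> g (Suc n)) (Dom P n)"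
    by (rule sum.reindex) (rule g_inj)
  then have "sum w (S P (Suc n)) = sum (w \<circ> g (Suc n)) (Dom P n)"
    using S_image[of P, OF P1 P2 n] by simp
  also have "\<dots> = (\<Sum>T\<in>S P n. \<Sum>N\<in>set (nodes T). \<Sum>i\<le>length (children N). w (ins (Suc n) (root N) i T))"
    unfolding Dom_def using fin
    by (simp add: sum_Sigma' g_def)
  also have "\<dots> = (\<Sum>T\<in>S P n. sum_list (map (\<lambda>N. \<Sum>i\<le>length (children N). w (ins (Suc n) (root N) i T)) (nodes T)))"
  proof (rule sum.cong[OF refl])
    fix T assume "T \<in> S P n"
    then have "distinct (nodes T)" using distinct_nodes unfolding S_def plane_tree_on_def by auto
    then show "(\<Sum>N\<in>set (nodes T). \<Sum>i\<le>length (children N). w (ins (Suc n) (root N) i T))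
      = sum_list (map (\<lambda>N. \<Sum>i\<le>length (children N). w (ins (Suc n) (root N) i T)) (nodes T))"
      by (rule sum.distinct_set_conv_list)
  qed
  finally show ?thesis .
qed



lemma length_nodes_sum: "length (nodes T) = Suc (sumn (\<lambda>N. length (children N)) T)"
proof (induction T)
  case (Node u cs)
  have "sum_list (map (length \<circ> nodes) cs) = sum_list (map (\<lambda>c. Suc (sumn (\<lambda>N. length (children N)) c)) cs)"
    using Node by (induction cs) auto
  also have "\<dots> = length cs + sum_list (map (sumn (\<lambda>N. length (children N))) cs)"
    by (induction cs) auto
  finally show ?case by (simp add: sumn_Node length_concat)
qed

lemma sl_lin: "sum_list (map (\<lambda>y. C * (a y * t + b y)) xs) = C * (sum_list (map a xs) * t + sum_list (map b xs)) "
  for C t :: "'a::comm_ring_1"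
  by (induction xs) (auto simp: algebra_simps)

lemma sl_if: "sum_list (map (\<lambda>y. if P y then x else 1) xs) = sum_list (map (\<lambda>y. if P y then x - 1 else 0) xs) + of_nat (length xs)"
  for x :: "'a::comm_ring_1"
  by (induction xs) (auto simp: algebra_simps)

lemma sum_list_map_const: "sum_list (map (\<lambda>_. c) xs) = of_nat (length xs) * (c::'a::semiring_1)"
  by (induction xs) (auto simp: algebra_simps)

lemma sum_list_map_of_nat: "sum_list (map (\<lambda>x. of_nat (f x)) xs) = (of_nat (sum_list (map f xs)) :: 'a::semiring_1)"
  by (induction xs) auto

lemma sum_atMost_split: fixes f :: "nat \<Rightarrow> 'a::comm_monoid_add" shows "(\<Sum>i\<le>k. f i) = (\<Sum>i<k. f i) + (f k :: 'a::comm_monoid_add)"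
  using sum.lessThan_Suc[of f k] by (simp add: lessThan_Suc_atMost)

lemma P2_noimp:
  assumes "no_improper T" "N \<in> set (nodes T)" "\<forall>l\<in>set (labels T). l \<le> root N"
  shows "children N = []"
proof (rule ccontr)
  assume ne: "children N \<noteq> []"
  let ?cs = "children N"
  let ?a = "length ?cs - 1"
  have a: "?a < length ?cs" using ne by simp
  have "elder_at ?cs ?a \<or> root N < beta (?cs ! ?a)"
    using assms(1,2) a unfolding no_improper_def by auto
  moreover have "\<not> elder_at ?cs ?a" unfolding elder_at_def by auto
  moreover have "beta (?cs ! ?a) \<le> root N"
  proof -
    have c: "?cs ! ?a \<in> set ?cs" using a by simp
    have "set (labels (?cs ! ?a)) \<subseteq> set (labels N)" using c by (cases N) auto
    then have "root (?cs ! ?a) \<in> set (labels T)"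
      using labels_sub[OF assms(2)] root_in_labels[of "?cs ! ?a"] by auto
    then show ?thesis using assms(3) beta_le_root[of "?cs ! ?a"] by fastforce
  qed
  ultimately show False by simp
qed

lemma P_n0_S: "P_n0 n = S no_improper n"
  unfolding P_n0_def S_def by simp

lemma weight_step:
  fixes x t :: "'a::comm_ring_1"
  assumes T: "plane_tree_on n T" and n: "1 \<le> n"
  shows "sum_list (map (\<lambda>N. \<Sum>i\<le>length (children N). x ^ young (ins (Suc n) (root N) i T) 1 * t ^ eld (ins (Suc n) (root N) i T)) (nodes T))
    = x ^ young T 1 * t ^ eld T * (x + of_nat (n - 1) + of_nat (n - 1) * t)"
proof -
  have dl: "distinct (labels T)" using T unfolding plane_tree_on_def by simp
  have lt: "\<forall>l\<in>set (labels T). l < Suc n" using T unfolding plane_tree_on_def by auto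
  let ?C = "x ^ young T 1 * t ^ eld T"
  have node: "(\<Sum>i\<le>length (children N). x ^ young (ins (Suc n) (root N) i T) 1 * t ^ eld (ins (Suc n) (root N) i T))
      = ?C * (of_nat (length (children N)) * t + (if root N = 1 then x else 1))"
    if N: "N \<in> set (nodes T)" for N
  proof -
    have e: "eld (ins (Suc n) (root N) i T) = eld T + (if i < length (children N) then 1 else 0)" for i
    proof -
      have "sumn (\<lambda>N'. if root N' = root N \<and> i < length (children N') then 1 else 0) T
          = sumn (\<lambda>N'. if root N' = root N then (if i < length (children N') then 1 else 0) else 0) T"
        by (rule arg_cong[where f="\<lambda>f. sumn f T"]) auto
      also have "\<dots> = (if i < length (children N) then 1 else 0)" by (rule sumn_unique[OF dl N])
      finally show ?thesis by (simp add: eld_ins[OF lt])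
    qed
    have y: "young (ins (Suc n) (root N) i T) 1 = young T 1 + (if root N = 1 \<and> length (children N) \<le> i then 1 else 0)" for i
    proof -
      have "sumn (\<lambda>N'. if root N' = 1 \<and> root N' = root N \<and> length (children N') \<le> i then 1 else 0) T
          = sumn (\<lambda>N'. if root N' = root N then (if root N = 1 \<and> length (children N') \<le> i then 1 else 0) else 0) T"
        by (rule arg_cong[where f="\<lambda>f. sumn f T"]) auto
      also have "\<dots> = (if root N = 1 \<and> length (children N) \<le> i then 1 else 0)" by (rule sumn_unique[OF dl N])
      finally show ?thesis by (simp add: young_ins[OF lt])
    qed
    let ?k = "length (children N)"
    have "(\<Sum>i\<le>?k. x ^ young (ins (Suc n) (root N) i T) 1 * t ^ eld (ins (Suc n) (root N) i T))
        = (\<Sum>i<?k. x ^ young (ins (Suc n) (root N) i T) 1 * t ^ eld (ins (Suc n) (root N) i T))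
          + x ^ young (ins (Suc n) (root N) ?k T) 1 * t ^ eld (ins (Suc n) (root N) ?k T)"
      by (rule sum_atMost_split)
    also have "(\<Sum>i<?k. x ^ young (ins (Suc n) (root N) i T) 1 * t ^ eld (ins (Suc n) (root N) i T))
        = (\<Sum>i<?k. ?C * t)"
      by (rule sum.cong[OF refl]) (simp only: e y, simp)
    also have "x ^ young (ins (Suc n) (root N) ?k T) 1 * t ^ eld (ins (Suc n) (root N) ?k T)
        = ?C * (if root N = 1 then x else 1)"
      by (simp only: e y, simp)
    finally show ?thesis by (simp add: algebra_simps)
  qed
  have "sum_list (map (\<lambda>N. \<Sum>i\<le>length (children N). x ^ young (ins (Suc n) (root N) i T) 1 * t ^ eld (ins (Suc n) (root N) i T)) (nodes T))
      = sum_list (map (\<lambda>N. ?C * (of_nat (length (children N)) * t + (if root N = 1 then x else 1))) (nodes T))"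
    using node by (intro arg_cong[where f=sum_list] map_cong) auto
  also have "\<dots> = ?C * (sum_list (map (\<lambda>N. of_nat (length (children N))) (nodes T)) * t
        + (sum_list (map (\<lambda>N. if root N = 1 then x - 1 else 0) (nodes T)) + of_nat (length (nodes T))))"
    by (simp only: sl_lin sl_if)
  also have "sum_list (map (\<lambda>N. of_nat (length (children N))) (nodes T)) = (of_nat (n - 1) :: 'a)"
  proof -
    have "length (nodes T) = n" using plane_length[OF T] by (simp add: labels_nodes)
    then have "sumn (\<lambda>N. length (children N)) T = n - 1" using length_nodes_sum[of T] by simp
    then show ?thesis by (simp add: sum_list_map_of_nat sumn_def)
  qed
  also have "length (nodes T) = n"
    using plane_length[OF T] by (simp add: labels_nodes)
  also have "sum_list (map (\<lambda>N. if root N = 1 then x - 1 else 0) (nodes T)) = x - 1"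
  proof -
    have "1 \<in> set (labels T)" using T n unfolding plane_tree_on_def by auto
    then obtain N1 where N1: "N1 \<in> set (nodes T)" "root N1 = 1" by (auto simp: labels_nodes)
    have "sumn (\<lambda>N. if root N = root N1 then x - 1 else 0) T = x - 1"
      by (rule sumn_unique[OF dl N1(1)])
    then show ?thesis using N1(2) by (simp add: sumn_def)
  qed
  finally show ?thesis using n by (simp add: algebra_simps of_nat_diff)
qed



lemma part1:
  fixes x t :: "'a::comm_ring_1"
  assumes "1 \<le> n"
  shows "(\<Sum>T\<in>P_n0 n. x ^ young T 1 * t ^ eld T) = (\<Prod>k<n - 1. x + of_nat k + of_nat k * t)"
  using assms
proof (induction n rule: dec_induct)
  case base
  have "P_n0 1 = {Node 1 []}" unfolding P_n0_S by (rule S_one) (simp add: no_improper_def)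
  moreover have "young (Node 1 []) 1 = 0" by (simp add: young_def)
  moreover have "eld (Node 1 []) = 0" by (simp add: eld_def eld_node_def)
  ultimately show ?case by simp
next
  case (step k)
  let ?w = "\<lambda>T. x ^ young T 1 * t ^ eld T"
  have p0: "no_improper (Node 1 [])" by (simp add: no_improper_def)
  have "(\<Sum>T\<in>P_n0 (Suc k). ?w T) = (\<Sum>T\<in>S no_improper k. sum_list (map (\<lambda>N. \<Sum>i\<le>length (children N). ?w (ins (Suc k) (root N) i T)) (nodes T)))"
    unfolding P_n0_S
    by (rule S_sum[OF no_improper_ins P2_noimp p0 step(1)])
  also have "\<dots> = (\<Sum>T\<in>S no_improper k. ?w T * (x + of_nat (k - 1) + of_nat (k - 1) * t))"
    by (rule sum.cong[OF refl]) (rule weight_step[OF _ step(1)], simp add: S_def)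
  also have "\<dots> = (\<Sum>T\<in>P_n0 k. ?w T) * (x + of_nat (k - 1) + of_nat (k - 1) * t)"
    by (simp add: sum_distrib_right P_n0_S)
  also have "\<dots> = (\<Prod>j<Suc k - 1. x + of_nat j + of_nat j * t)"
  proof -
    obtain k' where k': "k = Suc k'" using step(1) by (cases k) auto
    show ?thesis using step.IH unfolding k' by simp
  qed
  finally show ?case .
qed

lemma sl_Suc: "sum_list (map (\<lambda>y. \<Sum>i\<le>f y. (1::nat)) xs) = sum_list (map f xs) + length xs"
  by (induction xs) auto

lemma P2_incr:
  assumes "increasing_ptree T" "N \<in> set (nodes T)" "\<forall>l\<in>set (labels T). l \<le> root N"
  shows "children N = []"
proof (rule ccontr)
  assume "children N \<noteq> []"
  then obtain c where c: "c \<in> set (children N)" by (cases "children N") auto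
  have "root N < root c" using assms(1,2) c unfolding increasing_ptree_def by auto
  moreover have "set (labels c) \<subseteq> set (labels N)" using c by (cases N) auto
  then have "root c \<in> set (labels T)" using labels_sub[OF assms(2)] root_in_labels[of c] by auto
  ultimately show False using assms(3) by fastforce
qed

lemma part3:
  assumes "1 \<le> n"
  shows "card {T. plane_tree_on n T \<and> increasing_ptree T} = (\<Prod>i<n - 1. 2 * i + 1)"
proof -
  have "card (S increasing_ptree n) = (\<Prod>i<n - 1. 2 * i + 1)"
    using assms
  proof (induction n rule: dec_induct)
    case base
    have "S increasing_ptree 1 = {Node 1 []}" by (rule S_one) (simp add: increasing_ptree_def)
    then show ?case by simp
  next
    case (step k)
    have p0: "increasing_ptree (Node 1 [])" by (simp add: increasing_ptree_def)
    have "card (S increasing_ptree (Suc k)) = (\<Sum>T\<in>S increasing_ptree (Suc k). (1::nat))" by simp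
    also have "\<dots> = (\<Sum>T\<in>S increasing_ptree k. sum_list (map (\<lambda>N. \<Sum>i\<le>length (children N). (1::nat)) (nodes T)))"
      by (rule S_sum[OF incr_ins P2_incr p0 step(1)])
    also have "\<dots> = (\<Sum>T\<in>S increasing_ptree k. 2 * (k - 1) + 1)"
    proof (rule sum.cong[OF refl])
      fix T assume T: "T \<in> S increasing_ptree k"
      then have pt: "plane_tree_on k T" by (simp add: S_def)
      have ln: "length (nodes T) = k" using plane_length[OF pt] by (simp add: labels_nodes)
      have "sum_list (map (\<lambda>N. \<Sum>i\<le>length (children N). (1::nat)) (nodes T))
          = sum_list (map (\<lambda>N. length (children N)) (nodes T)) + length (nodes T)"
        by (rule sl_Suc)
      also have "\<dots> = (k - 1) + k" using length_nodes_sum[of T] ln by (simp add: sumn_def)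
      finally show "sum_list (map (\<lambda>N. \<Sum>i\<le>length (children N). (1::nat)) (nodes T)) = 2 * (k - 1) + 1"
        using step(1) by simp
    qed
    also have "\<dots> = card (S increasing_ptree k) * (2 * (k - 1) + 1)" by simp
    also have "\<dots> = (\<Prod>i<Suc k - 1. 2 * i + 1)"
    proof -
      obtain k' where k': "k = Suc k'" using step(1) by (cases k) auto
      show ?thesis using step.IH unfolding k' by simp
    qed
    finally show ?case .
  qed
  then show ?thesis by (simp add: S_def)
qed

definition Q :: "nat \<Rightarrow> (nat \<Rightarrow> nat) set" where
  "Q n = {p. (\<forall>j. j \<in> {2..n} \<longrightarrow> p j \<in> {1..j-1}) \<and> (\<forall>j. j \<notin> {2..n} \<longrightarrow> p j = 0)}"

lemma reach_one:
  assumes "p \<in> Q n" "j \<in> {1..n}"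
  shows "\<exists>m. (p ^^ m) j = 1"
  using assms(2)
proof (induction j rule: less_induct)
  case (less j)
  show ?case
  proof (cases "j = 1")
    case True
    then show ?thesis by (intro exI[of _ 0]) simp
  next
    case False
    then have j2: "j \<in> {2..n}" using less.prems by auto
    then have pj: "p j \<in> {1..j-1}" using assms(1) unfolding Q_def by auto
    then have "p j < j" "p j \<in> {1..n}" using j2 by auto
    then obtain m where "(p ^^ m) (p j) = 1" using less.IH by blast
    then have "(p ^^ Suc m) j = 1" by (simp add: funpow_Suc_right del: funpow.simps)
    then show ?thesis by blast
  qed
qed

lemma A_eq:
  assumes n: "1 \<le> n"
  shows "{(r, p). rooted_tree_on n r p \<and> increasing_rooted n r p} = (\<lambda>p. (1::nat, p)) ` Q n"
proof
  show "{(r, p). rooted_tree_on n r p \<and> increasing_rooted n r p} \<subseteq> (\<lambda>p. (1::nat, p)) ` Q n"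
  proof
    fix z assume "z \<in> {(r, p). rooted_tree_on n r p \<and> increasing_rooted n r p}"
    then obtain r p where z: "z = (r, p)" and rt: "rooted_tree_on n r p" and inc: "increasing_rooted n r p" by auto
    note rtu = rt[unfolded rooted_tree_on_def]
    have rt1: "\<forall>j\<in>{1..n}-{r}. p j \<in> {1..n}" by (rule conjunct1[OF conjunct2[OF rtu]])
    have rt2: "\<forall>j. j \<notin> {1..n}-{r} \<longrightarrow> p j = 0" by (rule conjunct1[OF conjunct2[OF conjunct2[OF rtu]]])
    have inc': "\<forall>j\<in>{1..n}-{r}. p j < j" using inc unfolding increasing_rooted_def .
    have r1: "r = 1"
    proof (rule ccontr)
      assume "r \<noteq> 1"
      then have j1: "1 \<in> {1..n} - {r}" using n by auto
      have "p 1 \<in> {1..n}" "p 1 < 1" using rt1 inc' j1 by blast+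
      then show False by simp
    qed
    have "p \<in> Q n"
      unfolding Q_def
    proof (intro CollectI conjI allI impI)
      fix j assume j: "j \<in> {2..n}"
      then have j': "j \<in> {1..n} - {r}" using r1 by auto
      have "p j \<in> {1..n}" "p j < j" using rt1 inc' j' by blast+
      then show "p j \<in> {1..j-1}" by auto
    next
      fix j assume j: "j \<notin> {2..n}"
      then have "j \<notin> {1..n} - {r}" using r1 by auto
      then show "p j = 0" by (rule rt2[rule_format])
    qed
    then show "z \<in> (\<lambda>p. (1::nat, p)) ` Q n" using z r1 by auto
  qed
next
  show "(\<lambda>p. (1::nat, p)) ` Q n \<subseteq> {(r, p). rooted_tree_on n r p \<and> increasing_rooted n r p}"
  proof
    fix z assume "z \<in> (\<lambda>p. (1::nat, p)) ` Q n"
    then obtain p where z: "z = (1, p)" and p: "p \<in> Q n" by auto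
    have st: "{1..n} - {1} = {2..n}" by auto
    have "rooted_tree_on n 1 p"
      unfolding rooted_tree_on_def st
    proof (intro conjI ballI allI impI)
      show "1 \<in> {1..n}" using n by simp
    next
      fix j assume j: "j \<in> {2..n}"
      have "p j \<in> {1..j-1}" using p j unfolding Q_def by blast
      then show "p j \<in> {1..n}" using j by auto
    next
      fix j assume "j \<notin> {2..n}"
      then show "p j = 0" using p unfolding Q_def by auto
    next
      fix j assume "j \<in> {1..n}"
      then show "\<exists>m. (p ^^ m) j = 1" by (rule reach_one[OF p])
    qed
    moreover have "increasing_rooted n 1 p"
      unfolding increasing_rooted_def st
    proof
      fix j assume j: "j \<in> {2..n}"
      have "p j \<in> {1..j-1}" using p j unfolding Q_def by blast
      then show "p j < j" using j by auto
    qed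
    ultimately show "z \<in> {(r, p). rooted_tree_on n r p \<and> increasing_rooted n r p}" using z by simp
  qed
qed

definition extq :: "nat \<Rightarrow> (nat \<Rightarrow> nat) \<Rightarrow> nat \<Rightarrow> nat" where
  "extq n f = (\<lambda>j. if j \<in> {2..n} then f j else 0)"

lemma Q_PiE: "Q n = extq n ` (PiE {2..n} (\<lambda>j. {1..j-1}))"
proof
  show "Q n \<subseteq> extq n ` (PiE {2..n} (\<lambda>j. {1..j-1}))"
  proof
    fix p assume p: "p \<in> Q n"
    have "p = extq n (restrict p {2..n})"
      using p unfolding Q_def extq_def by (auto simp: fun_eq_iff)
    moreover have "restrict p {2..n} \<in> PiE {2..n} (\<lambda>j. {1..j-1})"
      using p unfolding Q_def by auto
    ultimately show "p \<in> extq n ` (PiE {2..n} (\<lambda>j. {1..j-1}))" by blast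
  qed
next
  show "extq n ` (PiE {2..n} (\<lambda>j. {1..j-1})) \<subseteq> Q n"
    unfolding Q_def extq_def by (auto simp: PiE_iff)
qed

lemma extq_inj: "inj_on (extq n) (PiE {2..n} (\<lambda>j. {1..j-1}))"
proof (rule inj_onI)
  fix f g assume f: "f \<in> PiE {2..n} (\<lambda>j. {1..j-1})" and g: "g \<in> PiE {2..n} (\<lambda>j. {1..j-1})"
    and e: "extq n f = extq n g"
  show "f = g"
  proof
    fix j show "f j = g j"
    proof (cases "j \<in> {2..n}")
      case True
      then show ?thesis using fun_cong[OF e, of j] unfolding extq_def by simp
    next
      case False
      then show ?thesis using PiE_arb[OF f False] PiE_arb[OF g False] by simp
    qed
  qed
qed

lemma prod_fact: "(\<Prod>j\<in>{2..n}. j - 1) = fact (n - 1)"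
proof (induction n)
  case 0
  then show ?case by simp
next
  case (Suc n)
  show ?case
  proof (cases "n = 0")
    case True
    then show ?thesis by simp
  next
    case False
    then have "{2..Suc n} = insert (Suc n) {2..n}" by auto
    then have "(\<Prod>j\<in>{2..Suc n}. j - 1) = n * (\<Prod>j\<in>{2..n}. j - 1)" by simp
    also have "\<dots> = n * fact (n - 1)" using Suc.IH by simp
    also have "\<dots> = fact n"
    proof -
      obtain n' where n': "n = Suc n'" using False by (cases n) auto
      show ?thesis unfolding n' fact_Suc of_nat_id by simp
    qed
    finally show ?thesis by simp
  qed
qed

lemma part2:
  assumes "1 \<le> n"
  shows "card {(r, p). rooted_tree_on n r p \<and> increasing_rooted n r p} = fact (n - 1)"
proof -
  have "card {(r, p). rooted_tree_on n r p \<and> increasing_rooted n r p} = card (Q n)"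
    unfolding A_eq[OF assms] by (rule card_image) (auto simp: inj_on_def)
  also have "\<dots> = card (PiE {2..n} (\<lambda>j. {1..j-1}))"
    unfolding Q_PiE by (rule card_image[OF extq_inj])
  also have "\<dots> = (\<Prod>j\<in>{2..n}. card {1..j-1})" by (rule card_PiE) simp
  also have "\<dots> = (\<Prod>j\<in>{2..n}. j - 1)" by simp
  also have "\<dots> = fact (n - 1)" by (rule prod_fact)
  finally show ?thesis .
qed

theorem proposition2p4:
  fixes n :: nat and x t :: "'a :: comm_ring_1"
  assumes "n \<ge> 1"
  shows "((\<Sum>T\<in>P_n0 n. x ^ young T 1 * t ^ eld T)
           = (\<Prod>k<n - 1. x + of_nat k + of_nat k * t))
         \<and> card {(r, p). rooted_tree_on n r p \<and> increasing_rooted n r p} = fact (n - 1)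
         \<and> card {T. plane_tree_on n T \<and> increasing_ptree T} = (\<Prod>i<n - 1. 2 * i + 1)"
  by (intro conjI) (rule part1[OF assms], rule part2[OF assms], rule part3[OF assms])


end
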